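(* Let $N,T\ge1$. Let $\bar{\boldsymbol{\Psi}}_{\mathrm{id}}=\mathrm{diag}(\bar\psi_{\mathrm{id},1},\dots,\bar\psi_{\mathrm{id},N})$ with all $\bar\psi_{\mathrm{id},i}>0$, let $\bar\psi_{\mathrm{f},1}>0$, let $\mathbf{w}_1\in\mathbb{R}^N\setminus\{\mathbf{0}\}$, let $\theta\in[0,1]$, and let $\alpha_1,\dots,\alpha_T>0$, $\beta_1,\dots,\beta_T>0$ with $\sum_t\alpha_t=\sum_t\beta_t=1$. For a nonzero $\mathbf{x}_0\in\mathbb{R}^N$ define $$\Upsilon(\mathbf{x}_0)=\frac{\sum_{t=1}^T(\alpha_t(1-\theta)+\beta_t\theta)^2\,\mathbf{x}_0^\top\left(\alpha_t\bar{\boldsymbol{\Psi}}_{\mathrm{id}}+\beta_t\bar\psi_{\mathrm{f},1}\mathbf{w}_1\mathbf{w}_1^\top\right)^{-1}\mathbf{x}_0}{\mathbf{x}_0^\top\left(\bar{\boldsymbol{\Psi}}_{\mathrm{id}}+\bar\psi_{\mathrm{f},1}\mathbf{w}_1\mathbf{w}_1^\top\right)^{-1}\mathbf{x}_0}.$$ Let $\gamma_t=\beta_t/\alpha_t$, $\eta_1=\bar\psi_{\mathrm{f},1}\mathbf{w}_1^\top\bar{\boldsymbol{\Psi}}_{\mathrm{id}}^{-1}\mathbf{w}_1$, and $\Delta=\sum_{t=1}^T\frac{\alpha_t(1-\theta(1-\gamma_t))^2(1-\gamma_t)}{1+\eta_1\gamma_t}$. Then $$\Upsilon(\mathbf{x}_0)=1+\theta^2\Big(\sum_{t=1}^T\frac{\beta_t^2}{\alpha_t}-1\Big)+\Delta\cdot\left(\frac{\mathbf{x}_0^\top\bar{\boldsymbol{\Psi}}_{\mathrm{id}}^{-1}\mathbf{x}_0}{(\mathbf{w}_1^\top\bar{\boldsymbol{\Psi}}_{\mathrm{id}}^{-1}\mathbf{x}_0)^2}\cdot\frac{1+\eta_1}{\bar\psi_{\mathrm{f},1}}-1\right)^{-1},$$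 where the last term is interpreted as $0$ when $\mathbf{w}_1^\top\bar{\boldsymbol{\Psi}}_{\mathrm{id}}^{-1}\mathbf{x}_0=0$.
   Context: Single index fund setting: time-$t$ price impact matrix $\mathbf{G}_t=\left(\alpha_t\bar{\boldsymbol{\Psi}}_{\mathrm{id}}+\beta_t\bar\psi_{\mathrm{f},1}\mathbf{w}_1\mathbf{w}_1^\top\right)^{-1}$, expected cost of a schedule $(\mathbf{v}_t)$ is $\sum_t\tfrac12\mathbf{v}_t^\top\mathbf{G}_t\mathbf{v}_t$. The numerator of $\Upsilon$ (times $\tfrac12$) is the cost of the separable schedule $\mathbf{v}_t^{\mathrm{sep}}=(\alpha_t(1-\theta)+\beta_t\theta)\mathbf{x}_0$, and the denominator (times $\tfrac12$) is the minimal cost of liquidating $\mathbf{x}_0$ subject to $\sum_t\mathbf{v}_t=\mathbf{x}_0$. $\theta$ is the fraction of traded volume attributable to index-fund investors. *)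

theory Defs
  imports "HOL-Analysis.Analysis"
begin

definition diag_mat :: "real^'n \<Rightarrow> real^'n^'n" where
  "diag_mat d = (\<chi> i j. if i = j then d $ i else 0)"

definition outer :: "real^'n \<Rightarrow> real^'n \<Rightarrow> real^'n^'n" where
  "outer u v = (\<chi> i j. u $ i * v $ j)"

definition qform :: "real^'n^'n \<Rightarrow> real^'n \<Rightarrow> real" where
  "qform M x = x \<bullet> (M *v x)"

definition Upsilon ::
  "real^'n \<Rightarrow> real \<Rightarrow> real^'n \<Rightarrow> real \<Rightarrow> nat \<Rightarrow> (nat \<Rightarrow> real) \<Rightarrow> (nat \<Rightarrow> real) \<Rightarrow> real^'n \<Rightarrow> real"
  where
  "Upsilon psi_id psi_f w theta T alpha beta x0 =
     (\<Sum>t=1..T. (alpha t * (1 - theta) + beta t * theta)^2 *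
        qform (matrix_inv (alpha t *\<^sub>R diag_mat psi_id + (beta t * psi_f) *\<^sub>R outer w w)) x0)
     / qform (matrix_inv (diag_mat psi_id + psi_f *\<^sub>R outer w w)) x0"

end

theory Submission
  imports Defs
begin


lemma matrix_inv_eq:
  fixes A B :: "real^'n^'n"
  assumes "A ** B = mat 1" "B ** A = mat 1"
  shows "matrix_inv A = B"
proof -
  have ex: "\<exists>A'. A ** A' = mat 1 \<and> A' ** A = mat 1" using assms by blast
  define C where "C = matrix_inv A"
  have C: "A ** C = mat 1 \<and> C ** A = mat 1"
    unfolding C_def matrix_inv_def by (rule someI_ex[OF ex])
  have "C = C ** (A ** B)" using assms by simp
  also have "\<dots> = (C ** A) ** B" by (simp add: matrix_mul_assoc)
  also have "\<dots> = B" using C by simp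
  finally show ?thesis unfolding C_def .
qed

lemma mm_entry: "((A::real^'n^'n) ** B) $ i $ j = (\<Sum>l\<in>UNIV. A $ i $ l * B $ l $ j)"
  by (simp add: matrix_matrix_mult_def)

lemma inv_formula:
  fixes d w :: "real^'n"
  assumes d: "\<forall>i. d $ i > 0" and a: "a > 0" and k: "k \<ge> 0"
  defines "u \<equiv> (\<chi> i. w $ i / d $ i)"
  defines "e \<equiv> (\<Sum>i\<in>UNIV. w $ i * u $ i)"
  defines "c \<equiv> k / (a + k * e)"
  shows "matrix_inv (a *\<^sub>R diag_mat d + k *\<^sub>R outer w w)
       = (1/a) *\<^sub>R (diag_mat (\<chi> i. 1 / d $ i) - c *\<^sub>R outer u u)"
proof -
  define M where "M = a *\<^sub>R diag_mat d + k *\<^sub>R outer w w"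
  define B where "B = (1/a) *\<^sub>R (diag_mat (\<chi> i. 1 / d $ i) - c *\<^sub>R outer u u)"
  have e0: "e \<ge> 0" unfolding e_def u_def using d
    by (auto intro!: sum_nonneg simp: less_imp_le)
  have ake: "a + k * e > 0" using a k e0 by (simp add: add_pos_nonneg)
  have key: "k - c * a - c * k * e = 0" unfolding c_def using ake
    by (simp add: field_simps)
  have dn: "\<And>i. d $ i \<noteq> 0" using d by (metis less_irrefl)
  have wu: "\<And>l. w $ l = d $ l * u $ l" unfolding u_def using dn
    by (simp add: field_simps)
  have Me: "\<And>i l. M $ i $ l = (if l = i then a * d$i else 0) + k*(w$i*w$l)"
    by (simp add: M_def diag_mat_def outer_def)
  have Be: "\<And>l j. B $ l $ j = ((if l = j then 1/d$l else 0) - c*(u$l*u$j))/a"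
    by (simp add: B_def diag_mat_def outer_def)
  have es: "e = (\<Sum>l\<in>UNIV. u $ l * w $ l)" unfolding e_def by (simp add: mult.commute)
  have "M ** B = mat 1"
  proof (simp add: vec_eq_iff mm_entry, intro allI)
    fix i j :: 'n
    have "(\<Sum>l\<in>UNIV. M $ i $ l * B $ l $ j)
        = (\<Sum>l\<in>UNIV. (if l = i then d $ i * ((if i = j then 1 / d $ j else 0) - c * (u $ i * u $ j)) else 0)
             + (if l = j then (k/a) * w $ i * u $ j else 0)
             - ((k/a) * c * w $ i * u $ j) * (w $ l * u $ l))"
      apply (rule sum.cong[OF refl])
      using a dn[of i] dn[of j] by (auto simp: Me Be field_simps u_def)
    also have "\<dots> = d $ i * ((if i = j then 1 / d $ j else 0) - c * (u $ i * u $ j)) + (k/a) * w $ i * u $ j - ((k/a) * c * w $ i * u $ j) * e"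
      unfolding sum.distrib sum_subtractf sum_distrib_left[symmetric] e_def[symmetric] by simp
    also have "\<dots> = (if i = j then 1 else 0) + w $ i * u $ j * (k - c * a - c * k * e) / a"
      using a dn wu[of i] by (auto simp: field_simps)
    finally show "(\<Sum>l\<in>UNIV. M $ i $ l * B $ l $ j) = mat 1 $ i $ j" using key by (simp add: mat_def)
  qed
  moreover have "B ** M = mat 1"
  proof (simp add: vec_eq_iff mm_entry, intro allI)
    fix i j :: 'n
    have "(\<Sum>l\<in>UNIV. B $ i $ l * M $ l $ j)
        = (\<Sum>l\<in>UNIV. (if l = j then d $ j * ((if i = j then 1 / d $ i else 0) - c * (u $ i * u $ j)) else 0)
             + (if l = i then (k/a) * u $ i * w $ j else 0)
             - ((k/a) * c * u $ i * w $ j) * (w $ l * u $ l))"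
      apply (rule sum.cong[OF refl])
      using a dn[of i] dn[of j] by (auto simp: Me Be field_simps u_def)
    also have "\<dots> = d $ j * ((if i = j then 1 / d $ i else 0) - c * (u $ i * u $ j)) + (k/a) * u $ i * w $ j - ((k/a) * c * u $ i * w $ j) * e"
      unfolding sum.distrib sum_subtractf sum_distrib_left[symmetric] e_def[symmetric] by simp
    also have "\<dots> = (if i = j then 1 else 0) + u $ i * w $ j * (k - c * a - c * k * e) / a"
      using a dn wu[of j] by (auto simp: field_simps)
    finally show "(\<Sum>l\<in>UNIV. B $ i $ l * M $ l $ j) = mat 1 $ i $ j" using key by (simp add: mat_def)
  qed
  ultimately show ?thesis unfolding M_def B_def by (rule matrix_inv_eq)
qed


lemma aux_div: "(D::real) \<noteq> 0 \<Longrightarrow> X - X * Y / D = X * ((D - Y) / D)"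
  by (simp add: field_simps)

lemma aux2: "(c::real) \<noteq> 0 \<Longrightarrow> X / c * (b * c / D) = b * X / D"
  by simp

lemma aux3: "(a::real) \<noteq> 0 \<Longrightarrow> D \<noteq> 0 \<Longrightarrow> P^2/a*(den + F*Y/D) = P^2/a*den + F*(a*(P/a)^2*(Y/a)/(D/a))"
  by (simp add: field_simps power2_eq_square)

lemma aux4: "X - Z = W \<Longrightarrow> Y = X \<Longrightarrow> (q::real) - W = q - Y + Z"
  by simp

lemma aux5: "(a::real) \<noteq> 0 \<Longrightarrow> (a * (1 - theta) + b * theta)^2 / a = (1 - theta)^2 * a + 2 * theta * (1 - theta) * b + theta^2 * (b^2 / a)"
  by (simp add: field_simps power2_eq_square)

lemma aux6: "(s::real) \<noteq> 0 \<Longrightarrow> f \<noteq> 0 \<Longrightarrow> c \<noteq> 0 \<Longrightarrow> q - f/c* s^2 \<noteq> 0 \<Longrightarrow> (f* s^2/c)/(q - f/c* s^2) = inverse(q/s^2*(c/f) - 1)"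
proof -
  assume a: "s \<noteq> 0" "f \<noteq> 0" "c \<noteq> 0" "q - f/c* s^2 \<noteq> 0"
  have "q/s^2*(c/f) - 1 = (q - f/c* s^2) * c / (f * s^2)" using a by (simp add: field_simps)
  then show ?thesis using a by (simp add: field_simps)
qed

lemma scalar_part:
  fixes f e q s theta :: real and alpha beta :: "nat \<Rightarrow> real"
  assumes f: "f > 0" and e: "e \<ge> 0" and q: "q > 0" and cs: "s^2 \<le> e * q"
    and alpha_pos: "\<forall>t\<in>{1..T}. alpha t > 0"
    and beta_pos: "\<forall>t\<in>{1..T}. beta t > 0"
    and alpha_sum: "(\<Sum>t=1..T. alpha t) = 1"
    and beta_sum: "(\<Sum>t=1..T. beta t) = 1"
  defines "eta \<equiv> f * e"
  defines "gamma \<equiv> (\<lambda>t. beta t / alpha t)"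
  defines "Delta \<equiv> (\<Sum>t=1..T. alpha t * (1 - theta * (1 - gamma t))^2 * (1 - gamma t)
                              / (1 + eta * gamma t))"
  shows "(\<Sum>t=1..T. (alpha t * (1 - theta) + beta t * theta)^2 *
            ((1 / alpha t) * (q - (beta t * f) / (alpha t + (beta t * f) * e) * s^2)))
         / ((1/1) * (q - f / (1 + f * e) * s^2))
       = 1 + theta^2 * ((\<Sum>t=1..T. (beta t)^2 / alpha t) - 1)
          + (if s = 0 then 0
             else Delta * inverse (q / s^2 * ((1 + eta) / f) - 1))"
proof -
  define den where "den = q - f / (1 + f * e) * s^2"
  define F where "F = f * s^2 / (1 + eta)"
  define A where "A = (\<lambda>t. (alpha t * (1 - theta) + beta t * theta)^2 / alpha t)"
  define K where "K = 1 + theta^2 * ((\<Sum>t=1..T. (beta t)^2 / alpha t) - 1)"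
  have fe: "1 + f * e > 0" using f e by (simp add: add_pos_nonneg)
  have "f / (1 + f * e) * s^2 \<le> f / (1 + f * e) * (e * q)"
    using cs f fe by (intro mult_left_mono) auto
  also have "\<dots> < q" using fe q f e by (simp add: field_simps)
  finally have den: "den > 0" unfolding den_def by simp
  have summand: "(alpha t * (1 - theta) + beta t * theta)^2 *
            ((1 / alpha t) * (q - (beta t * f) / (alpha t + (beta t * f) * e) * s^2))
        = A t * den + F * (alpha t * (1 - theta * (1 - gamma t))^2 * (1 - gamma t)
                              / (1 + eta * gamma t))" if t: "t \<in> {1..T}" for t
  proof -
    have a: "alpha t > 0" and b: "beta t > 0" using t alpha_pos beta_pos by auto
    have abe: "alpha t + beta t * f * e > 0" using a b f e by (simp add: add_pos_nonneg)
    have g: "1 + eta * gamma t > 0" unfolding eta_def gamma_def using a b f e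
      by (simp add: add_pos_nonneg)
    have g2: "1 + eta * gamma t = (alpha t + beta t * f * e) / alpha t"
      unfolding eta_def gamma_def using a by (simp add: field_simps)
    have e1: "1 + eta > 0" unfolding eta_def using fe .
    define P where "P = alpha t * (1 - theta) + beta t * theta"
    have h1: "1 - theta * (1 - gamma t) = P / alpha t" unfolding P_def gamma_def using a
      by (simp add: field_simps)
    have h2: "1 - gamma t = (alpha t - beta t) / alpha t" unfolding gamma_def using a
      by (simp add: field_simps)
    have br: "q - (beta t * f) / (alpha t + (beta t * f) * e) * s^2
       = den + F * (alpha t - beta t) / (alpha t + beta t * f * e)"
    proof -
      have n1: "alpha t + beta t * f * e \<noteq> 0" using abe by simp
      have n2: "1 + f * e \<noteq> 0" using fe by simp
      have "f * s^2 / (1 + f * e) - f * s^2 / (1 + f * e) * (alpha t - beta t) / (alpha t + beta t * f * e)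
          = f * s^2 / (1 + f * e) * (((alpha t + beta t * f * e) - (alpha t - beta t)) / (alpha t + beta t * f * e))"
        using n1 by (rule aux_div)
      also have "((alpha t + beta t * f * e) - (alpha t - beta t)) = beta t * (1 + f * e)"
        by (simp add: algebra_simps)
      also have "f * s^2 / (1 + f * e) * (beta t * (1 + f * e) / (alpha t + beta t * f * e))
          = beta t * (f * s^2) / (alpha t + beta t * f * e)"
        using n2 by (rule aux2)
      also have "\<dots> = (beta t * f) / (alpha t + (beta t * f) * e) * s^2"
        by (simp add: ac_simps)
      finally have fin: "f * s^2 / (1 + f * e) - f * s^2 / (1 + f * e) * (alpha t - beta t) / (alpha t + beta t * f * e) = (beta t * f) / (alpha t + (beta t * f) * e) * s^2" .
      show ?thesis unfolding den_def F_def eta_def by (rule aux4[OF fin]) simp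
    qed
    have "(alpha t * (1 - theta) + beta t * theta)^2 *
            ((1 / alpha t) * (q - (beta t * f) / (alpha t + (beta t * f) * e) * s^2))
        = P^2 / alpha t * (den + F * (alpha t - beta t) / (alpha t + beta t * f * e))"
      unfolding br P_def by simp
    also have "\<dots> = A t * den + F * (alpha t * (P / alpha t)^2 * ((alpha t - beta t) / alpha t)
                              / ((alpha t + beta t * f * e) / alpha t))"
      unfolding A_def P_def[symmetric] using a abe by (intro aux3) auto
    finally have fin2: "(alpha t * (1 - theta) + beta t * theta)^2 *
            ((1 / alpha t) * (q - (beta t * f) / (alpha t + (beta t * f) * e) * s^2))
       = A t * den + F * (alpha t * (P / alpha t)^2 * ((alpha t - beta t) / alpha t)
                              / ((alpha t + beta t * f * e) / alpha t))" .
    show ?thesis unfolding h1 unfolding h2 g2 by (rule fin2)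
  qed
  have AK: "(\<Sum>t=1..T. A t) = K"
  proof -
    have "(\<Sum>t=1..T. A t) = (\<Sum>t=1..T. (1 - theta)^2 * alpha t + 2 * theta * (1 - theta) * beta t + theta^2 * ((beta t)^2 / alpha t))"
      apply (rule sum.cong[OF refl])
      using alpha_pos unfolding A_def by (intro aux5) force
    also have "\<dots> = (1 - theta)^2 + 2 * theta * (1 - theta) + theta^2 * (\<Sum>t=1..T. (beta t)^2 / alpha t)"
      unfolding sum.distrib sum_distrib_left[symmetric] alpha_sum beta_sum by simp
    also have "\<dots> = K" unfolding K_def by (simp add: algebra_simps power2_eq_square)
    finally show ?thesis .
  qed
  have "(\<Sum>t=1..T. (alpha t * (1 - theta) + beta t * theta)^2 *
            ((1 / alpha t) * (q - (beta t * f) / (alpha t + (beta t * f) * e) * s^2)))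
       = (\<Sum>t=1..T. A t * den + F * (alpha t * (1 - theta * (1 - gamma t))^2 * (1 - gamma t)
                              / (1 + eta * gamma t)))"
    by (rule sum.cong[OF refl]) (rule summand)
  also have "\<dots> = K * den + F * Delta"
    unfolding Delta_def sum.distrib sum_distrib_left[symmetric] sum_distrib_right[symmetric] AK ..
  finally have num: "(\<Sum>t=1..T. (alpha t * (1 - theta) + beta t * theta)^2 *
            ((1 / alpha t) * (q - (beta t * f) / (alpha t + (beta t * f) * e) * s^2)))
       = K * den + F * Delta" .
  have main: "(K * den + F * Delta) / den = K + F / den * Delta" using den by (simp add: field_simps)
  have last: "F / den = (if s = 0 then 0 else inverse (q / s^2 * ((1 + eta) / f) - 1))"
  proof (cases "s = 0")
    case True then show ?thesis unfolding F_def by simp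
  next
    case False
    have e1: "1 + eta > 0" unfolding eta_def using fe .
    have "F / den = inverse (q / s^2 * ((1 + eta) / f) - 1)"
      unfolding F_def den_def eta_def using False f e1 den unfolding eta_def den_def
      by (intro aux6) auto
    then show ?thesis using False by simp
  qed
  have dd: "(1/1) * (q - f / (1 + f * e) * s^2) = den" by (simp add: den_def)
  have "(\<Sum>t=1..T. (alpha t * (1 - theta) + beta t * theta)^2 *
            ((1 / alpha t) * (q - (beta t * f) / (alpha t + (beta t * f) * e) * s^2)))
         / ((1/1) * (q - f / (1 + f * e) * s^2)) = K + F / den * Delta"
    unfolding num dd main ..
  also have "\<dots> = K + (if s = 0 then 0 else Delta * inverse (q / s^2 * ((1 + eta) / f) - 1))"
    unfolding last by (simp add: mult.commute)
  finally show ?thesis unfolding K_def .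
qed


lemma qform_B:
  fixes v u x :: "real^'n"
  shows "qform ((1/a) *\<^sub>R (diag_mat v - c *\<^sub>R outer u u)) x
       = (1/a) * ((\<Sum>i\<in>UNIV. v $ i * x $ i * x $ i) - c * (\<Sum>i\<in>UNIV. u $ i * x $ i)^2)"
proof -
  have mv: "((1/a) *\<^sub>R (diag_mat v - c *\<^sub>R outer u u)) *v x
      = (\<chi> i. (1/a) * (v $ i * x $ i - c * u $ i * (\<Sum>j\<in>UNIV. u $ j * x $ j)))"
  proof -
    have "\<And>i. (\<Sum>j\<in>UNIV. (1/a) * ((if i = j then v $ i else 0) - c * (u $ i * u $ j)) * x $ j)
        = (1/a) * (v $ i * x $ i - c * u $ i * (\<Sum>j\<in>UNIV. u $ j * x $ j))"
    proof -
      fix i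
      have "(\<Sum>j\<in>UNIV. (1/a) * ((if i = j then v $ i else 0) - c * (u $ i * u $ j)) * x $ j)
          = (\<Sum>j\<in>UNIV. (if i = j then (1/a) * (v $ i * x $ i) else 0) - ((1/a) * c * u $ i) * (u $ j * x $ j))"
        by (rule sum.cong[OF refl]) (auto simp: algebra_simps)
      also have "\<dots> = (1/a) * (v $ i * x $ i) - ((1/a) * c * u $ i) * (\<Sum>j\<in>UNIV. u $ j * x $ j)"
        unfolding sum_subtractf sum_distrib_left[symmetric] by simp
      finally show "(\<Sum>j\<in>UNIV. (1/a) * ((if i = j then v $ i else 0) - c * (u $ i * u $ j)) * x $ j)
        = (1/a) * (v $ i * x $ i - c * u $ i * (\<Sum>j\<in>UNIV. u $ j * x $ j))"
        by (simp add: algebra_simps)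
    qed
    then show ?thesis
      by (simp add: vec_eq_iff matrix_vector_mult_def diag_mat_def outer_def)
  qed
  show ?thesis unfolding qform_def mv inner_vec_def
    by (simp add: algebra_simps sum_subtractf sum_distrib_left sum_distrib_right power2_eq_square)
qed



theorem proposition5:
  fixes psi_id :: "real^'n" and psi_f :: real and w x0 :: "real^'n"
    and theta :: real and T :: nat and alpha beta :: "nat \<Rightarrow> real"
  assumes psi_pos: "\<forall>i. psi_id $ i > 0"
    and psi_f_pos: "psi_f > 0"
    and w_nz: "w \<noteq> 0"
    and theta: "0 \<le> theta" "theta \<le> 1"
    and T: "T \<ge> 1"
    and alpha_pos: "\<forall>t\<in>{1..T}. alpha t > 0"
    and beta_pos: "\<forall>t\<in>{1..T}. beta t > 0"
    and alpha_sum: "(\<Sum>t=1..T. alpha t) = 1"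
    and beta_sum: "(\<Sum>t=1..T. beta t) = 1"
    and x0_nz: "x0 \<noteq> 0"
  shows
    "let Pinv = matrix_inv (diag_mat psi_id);
         gamma = (\<lambda>t. beta t / alpha t);
         eta = psi_f * (w \<bullet> (Pinv *v w));
         Delta = (\<Sum>t=1..T. alpha t * (1 - theta * (1 - gamma t))^2 * (1 - gamma t)
                              / (1 + eta * gamma t));
         s = w \<bullet> (Pinv *v x0)
     in Upsilon psi_id psi_f w theta T alpha beta x0 =
          1 + theta^2 * ((\<Sum>t=1..T. (beta t)^2 / alpha t) - 1)
          + (if s = 0 then 0
             else Delta * inverse (qform Pinv x0 / s^2 * ((1 + eta) / psi_f) - 1))"
proof -
  define d where "d = psi_id"
  define f where "f = psi_f"
  define u where "u = (\<chi> i. w $ i / d $ i)"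
  define e where "e = (\<Sum>i\<in>UNIV. w $ i * u $ i)"
  define q where "q = (\<Sum>i\<in>UNIV. (\<chi> i. 1 / d $ i) $ i * x0 $ i * x0 $ i)"
  define s where "s = (\<Sum>i\<in>UNIV. u $ i * x0 $ i)"
  have d: "\<forall>i. d $ i > 0" using psi_pos d_def by simp
  have f: "f > 0" using psi_f_pos f_def by simp
  have dn: "\<And>i. d $ i \<noteq> 0" using d by (metis less_irrefl)
  have inv: "\<And>a k. a > 0 \<Longrightarrow> k \<ge> 0 \<Longrightarrow> matrix_inv (a *\<^sub>R diag_mat d + k *\<^sub>R outer w w)
       = (1/a) *\<^sub>R (diag_mat (\<chi> i. 1 / d $ i) - (k / (a + k * e)) *\<^sub>R outer u u)"
    unfolding u_def e_def using d by (rule inv_formula)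
  have qf: "\<And>a k. a > 0 \<Longrightarrow> k \<ge> 0 \<Longrightarrow> qform (matrix_inv (a *\<^sub>R diag_mat d + k *\<^sub>R outer w w)) x0
       = (1/a) * (q - (k / (a + k * e)) * s^2)"
    unfolding q_def s_def by (simp only: inv qform_B)
  have Pinv: "matrix_inv (diag_mat psi_id) = diag_mat (\<chi> i. 1 / d $ i)"
    using inv[of 1 0] by (simp add: d_def)
  have Pv: "\<And>v. diag_mat (\<chi> i. 1 / d $ i) *v v = (\<chi> i. v $ i / d $ i)"
  proof -
    fix v :: "real^'n"
    have "\<And>i. (\<Sum>j\<in>UNIV. (if i = j then (\<chi> i. 1 / d $ i) $ i else 0) * v $ j) = v $ i / d $ i"
    proof -
      fix i
      have "(\<Sum>j\<in>UNIV. (if i = j then (\<chi> i. 1 / d $ i) $ i else 0) * v $ j) = (\<Sum>j\<in>UNIV. if i = j then v $ i / d $ i else 0)"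
        by (rule sum.cong) auto
      then show "(\<Sum>j\<in>UNIV. (if i = j then (\<chi> i. 1 / d $ i) $ i else 0) * v $ j) = v $ i / d $ i" by simp
    qed
    then show "diag_mat (\<chi> i. 1 / d $ i) *v v = (\<chi> i. v $ i / d $ i)"
      by (simp add: vec_eq_iff matrix_vector_mult_def diag_mat_def)
  qed
  have eta: "w \<bullet> (matrix_inv (diag_mat psi_id) *v w) = e"
    unfolding Pinv Pv e_def u_def inner_vec_def by simp
  have sx: "w \<bullet> (matrix_inv (diag_mat psi_id) *v x0) = s"
    unfolding Pinv Pv s_def u_def inner_vec_def by (simp add: algebra_simps)
  have qx: "qform (matrix_inv (diag_mat psi_id)) x0 = q"
    using qf[of 1 0] by (simp add: d_def)
  have ups: "Upsilon psi_id psi_f w theta T alpha beta x0 =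
     (\<Sum>t=1..T. (alpha t * (1 - theta) + beta t * theta)^2 *
            ((1 / alpha t) * (q - (beta t * f) / (alpha t + (beta t * f) * e) * s^2)))
         / ((1/1) * (q - f / (1 + f * e) * s^2))"
  proof -
    have "diag_mat psi_id + psi_f *\<^sub>R outer w w = 1 *\<^sub>R diag_mat d + f *\<^sub>R outer w w"
      by (simp add: d_def f_def)
    then have den: "qform (matrix_inv (diag_mat psi_id + psi_f *\<^sub>R outer w w)) x0
        = (1/1) * (q - f / (1 + f * e) * s^2)"
      using qf[of 1 f] f by simp
    have "(\<Sum>t=1..T. (alpha t * (1 - theta) + beta t * theta)^2 *
        qform (matrix_inv (alpha t *\<^sub>R diag_mat psi_id + (beta t * psi_f) *\<^sub>R outer w w)) x0)
        = (\<Sum>t=1..T. (alpha t * (1 - theta) + beta t * theta)^2 *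
            ((1 / alpha t) * (q - (beta t * f) / (alpha t + (beta t * f) * e) * s^2)))"
    proof (rule sum.cong[OF refl])
      fix t assume t: "t \<in> {1..T}"
      have "beta t * f \<ge> 0" using t beta_pos f by (simp add: less_imp_le)
      then show "(alpha t * (1 - theta) + beta t * theta)^2 *
        qform (matrix_inv (alpha t *\<^sub>R diag_mat psi_id + (beta t * psi_f) *\<^sub>R outer w w)) x0
        = (alpha t * (1 - theta) + beta t * theta)^2 *
            ((1 / alpha t) * (q - (beta t * f) / (alpha t + (beta t * f) * e) * s^2))"
        using qf[of "alpha t" "beta t * f"] t alpha_pos by (simp add: d_def f_def)
    qed
    then show ?thesis unfolding Upsilon_def den by simp
  qed
  have e0: "e \<ge> 0" unfolding e_def u_def using d
    by (auto intro!: sum_nonneg simp: less_imp_le)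
  have qpos: "q > 0"
  proof -
    obtain j where j: "x0 $ j \<noteq> 0" using x0_nz by (metis vec_eq_iff zero_index)
    show ?thesis unfolding q_def
    proof (rule sum_pos2[of UNIV j])
      show "0 < (\<chi> i. 1 / d $ i) $ j * x0 $ j * x0 $ j"
        using j d[rule_format, of j] by (simp add: divide_pos_pos not_square_less_zero less_le)
      show "\<And>i. i \<in> UNIV \<Longrightarrow> 0 \<le> (\<chi> i. 1 / d $ i) $ i * x0 $ i * x0 $ i"
        using d by (simp add: less_imp_le mult.assoc)
    qed auto
  qed
  have cs: "s^2 \<le> e * q"
  proof -
    have "(\<Sum>i\<in>UNIV. (w $ i / sqrt (d $ i)) * (x0 $ i / sqrt (d $ i)))^2
       \<le> (\<Sum>i\<in>UNIV. (w $ i / sqrt (d $ i))^2) * (\<Sum>i\<in>UNIV. (x0 $ i / sqrt (d $ i))^2)"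
      by (rule Cauchy_Schwarz_ineq_sum)
    moreover have "(\<Sum>i\<in>UNIV. (w $ i / sqrt (d $ i)) * (x0 $ i / sqrt (d $ i))) = s"
      unfolding s_def u_def using d by (intro sum.cong) (auto simp: less_imp_le)
    moreover have "(\<Sum>i\<in>UNIV. (w $ i / sqrt (d $ i))^2) = e"
      unfolding e_def u_def using d by (intro sum.cong) (auto simp: less_imp_le power_divide power2_eq_square)
    moreover have "(\<Sum>i\<in>UNIV. (x0 $ i / sqrt (d $ i))^2) = q"
      unfolding q_def using d by (intro sum.cong) (auto simp: less_imp_le power_divide power2_eq_square)
    ultimately show ?thesis by simp
  qed
  have sc: "(\<Sum>t=1..T. (alpha t * (1 - theta) + beta t * theta)^2 *
            ((1 / alpha t) * (q - (beta t * f) / (alpha t + (beta t * f) * e) * s^2)))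
         / ((1/1) * (q - f / (1 + f * e) * s^2))
       = 1 + theta^2 * ((\<Sum>t=1..T. (beta t)^2 / alpha t) - 1)
          + (if s = 0 then 0
             else (\<Sum>t=1..T. alpha t * (1 - theta * (1 - beta t / alpha t))^2 * (1 - beta t / alpha t)
                              / (1 + f * e * (beta t / alpha t))) * inverse (q / s^2 * ((1 + f * e) / f) - 1))"
    by (rule scalar_part[OF f e0 qpos cs alpha_pos beta_pos alpha_sum beta_sum])
  show ?thesis unfolding Let_def eta sx qx ups sc by (simp add: f_def)
qed

end
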